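(* Let $F$ be a minimally unsatisfiable clause-set and $(v,w)$ a singular tuple for $F$ with singularity-degree tuple $(1,1)$. Let $C,D\in F$ be the two clauses containing the variable $v$. 1. Assume $w$ is not 1-singular for $F$. Then $w$ is 2-singular for $F$; if $E_0\in F$ is its main clause and $E_1,E_2\in F$ its two side clauses, then $\{E_1,E_2\}=\{C,D\}$; $v$ is 1-singular for $\mathrm{DP}_w(F)$; and thus $(w,v)$ is a singular tuple for $F$ with singularity-degree tuple $(2,1)$. 2. Otherwise ($w$ is 1-singular for $F$): $v$ is 1-singular for $\mathrm{DP}_w(F)$; thus $(w,v)$ is a singular tuple for $F$ with singularity-degree tuple $(1,1)$; and if $E_1,E_2$ are the two clauses of $F$ containing the variable $w$, then $|\{C,D\}\cap\{E_1,E_2\}|\le1$.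
   Context: Literals are variables $v$ and complements $\overline{v}$; a clause is a finite set of literals with no complementary pair; a clause-set is a finite set of clauses; $\mathrm{ldeg}_F(x)$ is the number of clauses of $F$ containing literal $x$, $\mathrm{vdeg}_F(v)=\mathrm{ldeg}_F(v)+\mathrm{ldeg}_F(\overline{v})$. $\mathrm{DP}_v(F) := \{C \in F : v \notin \mathrm{var}(C)\} \cup \{(C \cup D)\setminus\{v,\overline{v}\} : C, D \in F,\ C \cap \overline{D} = \{v\}\}$; $\mathrm{DP}_{v,w}(F)=\mathrm{DP}_w(\mathrm{DP}_v(F))$. A variable $v$ is singular for $F$ if $\min(\mathrm{ldeg}_F(v),\mathrm{ldeg}_F(\overline{v}))=1$, $m$-singular if additionally $\mathrm{vdeg}_F(v)-1=m$; 1-singular means $\mathrm{ldeg}_F(v)=\mathrm{ldeg}_F(\overline{v})=1$. For a singular variable with singular literal $x$ (a literal of $v$ with $\mathrm{ldeg}_F(x)=1$), the main clause is the clause containing $x$ and the side clauses are those containing $\overline{x}$. For minimally unsatisfiable $F$, $(v,w)$ is a singular tuple if $v$ is singular for $F$ and $w$ is singular for $\mathrm{DP}_v(F)$; its singularity-degree tuple is $(m_1,m_2)$ where $v$ is $m_1$-singular for $F$ and $w$ is $m_2$-singular for $\mathrm{DP}_v(F)$. *)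

theory Defs
  imports Main
begin

datatype 'v lit = Pos 'v | Neg 'v

fun comp :: "'v lit \<Rightarrow> 'v lit" where
  "comp (Pos v) = Neg v" | "comp (Neg v) = Pos v"

fun var :: "'v lit \<Rightarrow> 'v" where
  "var (Pos v) = v" | "var (Neg v) = v"

type_synonym 'v clause = "'v lit set"

definition vars_cl :: "'v clause \<Rightarrow> 'v set" where
  "vars_cl C = var ` C"

definition is_clause :: "'v clause \<Rightarrow> bool" where
  "is_clause C \<longleftrightarrow> finite C \<and> (\<forall>x\<in>C. comp x \<notin> C)"

definition is_clause_set :: "'v clause set \<Rightarrow> bool" where
  "is_clause_set F \<longleftrightarrow> finite F \<and> (\<forall>C\<in>F. is_clause C)"

fun lit_val :: "('v \<Rightarrow> bool) \<Rightarrow> 'v lit \<Rightarrow> bool" where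
  "lit_val \<phi> (Pos v) = \<phi> v" | "lit_val \<phi> (Neg v) = (\<not> \<phi> v)"

definition sat :: "'v clause set \<Rightarrow> bool" where
  "sat F \<longleftrightarrow> (\<exists>\<phi>. \<forall>C\<in>F. \<exists>x\<in>C. lit_val \<phi> x)"

definition min_unsat :: "'v clause set \<Rightarrow> bool" where
  "min_unsat F \<longleftrightarrow> is_clause_set F \<and> \<not> sat F \<and> (\<forall>C\<in>F. sat (F - {C}))"

definition ldeg :: "'v clause set \<Rightarrow> 'v lit \<Rightarrow> nat" where
  "ldeg F x = card {C\<in>F. x \<in> C}"

definition vdeg :: "'v clause set \<Rightarrow> 'v \<Rightarrow> nat" where
  "vdeg F v = ldeg F (Pos v) + ldeg F (Neg v)"

definition DP :: "'v \<Rightarrow> 'v clause set \<Rightarrow> 'v clause set" where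
  "DP v F = {C\<in>F. v \<notin> vars_cl C} \<union>
     {(C \<union> D) - {Pos v, Neg v} | C D. C \<in> F \<and> D \<in> F \<and> C \<inter> comp ` D = {Pos v}}"

definition singular :: "'v clause set \<Rightarrow> 'v \<Rightarrow> bool" where
  "singular F v \<longleftrightarrow> min (ldeg F (Pos v)) (ldeg F (Neg v)) = 1"

definition m_singular :: "'v clause set \<Rightarrow> 'v \<Rightarrow> nat \<Rightarrow> bool" where
  "m_singular F v m \<longleftrightarrow> singular F v \<and> vdeg F v - 1 = m"

text \<open>Singular tuple (v,w) for F (F minimally unsatisfiable is assumed separately).\<close>
definition singular_tuple :: "'v clause set \<Rightarrow> 'v \<Rightarrow> 'v \<Rightarrow> bool" where
  "singular_tuple F v w \<longleftrightarrow> singular F v \<and> singular (DP v F) w"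

definition sdeg_tuple :: "'v clause set \<Rightarrow> 'v \<Rightarrow> 'v \<Rightarrow> nat \<Rightarrow> nat \<Rightarrow> bool" where
  "sdeg_tuple F v w m1 m2 \<longleftrightarrow> m_singular F v m1 \<and> m_singular (DP v F) w m2"

end

theory Submission
  imports Defs
begin


lemma comp_comp[simp]: "comp (comp x) = x" by (cases x) auto
lemma var_comp[simp]: "var (comp x) = var x" by (cases x) auto
lemma comp_neq[simp]: "comp x \<noteq> x" by (cases x) auto
lemma lit_val_comp[simp]: "lit_val \<phi> (comp x) = (\<not> lit_val \<phi> x)" by (cases x) auto
lemma var_eq: "var a = var b \<Longrightarrow> a = b \<or> a = comp b" by (cases a; cases b) auto
lemma lit_val_upd: "var a \<noteq> u \<Longrightarrow> lit_val (\<phi>(u:=b)) a = lit_val \<phi> a" by (cases a) auto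
lemma in_vars_cl: "u \<in> vars_cl E \<longleftrightarrow> Pos u \<in> E \<or> Neg u \<in> E"
  unfolding vars_cl_def image_iff by (metis var.elims var.simps)
lemma posneg: "var y = u \<Longrightarrow> {Pos u, Neg u} = {y, comp y}" by (cases y) auto
lemma clause_cons: "is_clause C \<Longrightarrow> x \<in> C \<Longrightarrow> comp x \<notin> C"
  by (auto simp: is_clause_def)
lemma comp_img: "z \<in> comp ` E \<longleftrightarrow> comp z \<in> E"
  by (auto simp: image_iff) (metis comp_comp)

lemma MU_fin: "min_unsat F \<Longrightarrow> finite F" by (auto simp: min_unsat_def is_clause_set_def)
lemma MU_cl: "min_unsat F \<Longrightarrow> E \<in> F \<Longrightarrow> is_clause E" by (auto simp: min_unsat_def is_clause_set_def)

lemma ldeg1: "finite F \<Longrightarrow> ldeg F x = 1 \<Longrightarrow> \<exists>P. {E\<in>F. x\<in>E} = {P}"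
  unfolding ldeg_def by (meson card_1_singletonE)

lemma MU_removed:
  assumes "min_unsat F" "P \<in> F"
  obtains \<phi> where "\<forall>E\<in>F-{P}. \<exists>a\<in>E. lit_val \<phi> a" "\<forall>a\<in>P. \<not> lit_val \<phi> a"
proof -
  from assms have "sat (F - {P})" "\<not> sat F" by (auto simp: min_unsat_def)
  then obtain \<phi> where \<phi>: "\<forall>E\<in>F-{P}. \<exists>a\<in>E. lit_val \<phi> a" by (auto simp: sat_def)
  have "\<forall>a\<in>P. \<not> lit_val \<phi> a"
  proof (rule ccontr)
    assume "\<not> ?thesis" then have "\<forall>E\<in>F. \<exists>a\<in>E. lit_val \<phi> a" using \<phi> by auto
    then have "sat F" unfolding sat_def by blast
    with \<open>\<not> sat F\<close> show False by blast
  qed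
  with \<phi> that show ?thesis by blast
qed

lemma no_resolvent_false:
  assumes MU: "min_unsat F" and P: "P \<in> F" "y \<in> P"
    and H: "\<forall>Q\<in>F. comp y \<in> Q \<longrightarrow> P \<inter> comp ` Q \<noteq> {y}"
  shows False
proof -
  obtain \<phi> where \<phi>: "\<forall>E\<in>F-{P}. \<exists>a\<in>E. lit_val \<phi> a" and Pf: "\<forall>a\<in>P. \<not> lit_val \<phi> a"
    using MU_removed[OF MU P(1)] by blast
  have clP: "is_clause P" using MU_cl[OF MU P(1)] .
  define \<psi> where "\<psi> = \<phi>(var y := (y = Pos (var y)))"
  have \<psi>y: "lit_val \<psi> y" by (cases y) (auto simp: \<psi>_def)
  have \<psi>o: "\<And>a. var a \<noteq> var y \<Longrightarrow> lit_val \<psi> a = lit_val \<phi> a" by (simp add: \<psi>_def lit_val_upd)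
  have "\<forall>E\<in>F. \<exists>a\<in>E. lit_val \<psi> a"
  proof
    fix E assume E: "E \<in> F"
    show "\<exists>a\<in>E. lit_val \<psi> a"
    proof (cases "y \<in> E")
      case True then show ?thesis using \<psi>y by blast
    next
      case yE: False
      show ?thesis
      proof (cases "comp y \<in> E")
        case True
        with H E have ne: "P \<inter> comp ` E \<noteq> {y}" by auto
        have "y \<in> P \<inter> comp ` E" using P True by (simp add: comp_img)
        then obtain z where z: "z \<in> P" "z \<in> comp ` E" "z \<noteq> y" using ne by blast
        then have z2: "comp z \<in> E" by (simp add: comp_img)
        have "comp y \<notin> P" using clP P clause_cons by blast
        then have "var z \<noteq> var y" using z var_eq by metis
        then have "lit_val \<psi> (comp z)" using \<psi>o Pf z by simp
        then show ?thesis using z2 by blast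
      next
        case False
        with yE have "E \<noteq> P" using P by auto
        with \<phi> E obtain a where a: "a\<in>E" "lit_val \<phi> a" by auto
        have "var a \<noteq> var y" using var_eq yE False a by metis
        then show ?thesis using a \<psi>o by auto
      qed
    qed
  qed
  then have "sat F" unfolding sat_def by blast
  thus False using MU by (auto simp: min_unsat_def)
qed

lemma resolvent_notin:
  assumes MU: "min_unsat F" and P: "{E\<in>F. y\<in>E} = {P}" and Q: "{E\<in>F. comp y\<in>E} = {Q}"
    and cl: "P \<inter> comp ` Q = {y}"
  shows "(P \<union> Q) - {y, comp y} \<notin> F"
proof
  assume R: "(P \<union> Q) - {y, comp y} \<in> F"
  have PF: "P \<in> F" "y \<in> P" using P by auto
  have QF: "Q \<in> F" "comp y \<in> Q" using Q by auto
  obtain \<phi> where \<phi>: "\<forall>E\<in>F-{P}. \<exists>a\<in>E. lit_val \<phi> a" and Pf: "\<forall>a\<in>P. \<not> lit_val \<phi> a"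
    using MU_removed[OF MU PF(1)] by blast
  have "(P \<union> Q) - {y, comp y} \<noteq> P" using PF by auto
  then obtain a where a: "a \<in> (P \<union> Q) - {y, comp y}" "lit_val \<phi> a" using \<phi> R by blast
  with Pf have aQ: "a \<in> Q" by auto
  have va: "var a \<noteq> var y" using a var_eq by (metis DiffD2 insertCI)
  define \<psi> where "\<psi> = \<phi>(var y := (y = Pos (var y)))"
  have \<psi>y: "lit_val \<psi> y" by (cases y) (auto simp: \<psi>_def)
  have \<psi>o: "\<And>a. var a \<noteq> var y \<Longrightarrow> lit_val \<psi> a = lit_val \<phi> a" by (simp add: \<psi>_def lit_val_upd)
  have "\<forall>E\<in>F. \<exists>a\<in>E. lit_val \<psi> a"
  proof
    fix E assume E: "E \<in> F"
    show "\<exists>a\<in>E. lit_val \<psi> a"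
    proof (cases "E = P")
      case True then show ?thesis using \<psi>y PF by blast
    next
      case nP: False
      show ?thesis
      proof (cases "E = Q")
        case True then show ?thesis using aQ va \<psi>o a by auto
      next
        case False
        have "y \<notin> E" "comp y \<notin> E" using P Q E nP False by auto
        from \<phi> E nP obtain b where b: "b\<in>E" "lit_val \<phi> b" by auto
        have "var b \<noteq> var y" using var_eq \<open>y \<notin> E\<close> \<open>comp y \<notin> E\<close> b by metis
        then show ?thesis using b \<psi>o by auto
      qed
    qed
  qed
  then have "sat F" unfolding sat_def by blast
  thus False using MU by (auto simp: min_unsat_def)
qed

lemma comp_eq_iff: "(comp a = b) = (a = comp b)" by (cases a; cases b) auto

lemma clash_swap: "(P \<inter> comp ` Q = {z}) = (Q \<inter> comp ` P = {comp z})"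
proof -
  have a: "(P \<inter> comp ` Q = {z}) = (\<forall>a. (a \<in> P \<and> comp a \<in> Q) = (a = z))"
    unfolding set_eq_iff Int_iff comp_img singleton_iff by (rule refl)
  have b: "(Q \<inter> comp ` P = {comp z}) = (\<forall>a. (a \<in> Q \<and> comp a \<in> P) = (a = comp z))"
    unfolding set_eq_iff Int_iff comp_img singleton_iff by (rule refl)
  have c: "(\<forall>a. (a \<in> P \<and> comp a \<in> Q) = (a = z)) = (\<forall>a. (a \<in> Q \<and> comp a \<in> P) = (a = comp z))"
  proof
    assume h: "\<forall>a. (a \<in> P \<and> comp a \<in> Q) = (a = z)"
    show "\<forall>a. (a \<in> Q \<and> comp a \<in> P) = (a = comp z)"
    proof
      fix a have "(comp a \<in> P \<and> a \<in> Q) = (comp a = z)" using h[rule_format, of "comp a"] unfolding comp_comp .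
      moreover have "(comp a = z) = (a = comp z)" by (rule comp_eq_iff)
      ultimately show "(a \<in> Q \<and> comp a \<in> P) = (a = comp z)" by blast
    qed
  next
    assume h: "\<forall>a. (a \<in> Q \<and> comp a \<in> P) = (a = comp z)"
    show "\<forall>a. (a \<in> P \<and> comp a \<in> Q) = (a = z)"
    proof
      fix a have "(comp a \<in> Q \<and> a \<in> P) = (comp a = comp z)" using h[rule_format, of "comp a"] unfolding comp_comp .
      moreover have "(comp a = comp z) = (a = z)" by (metis comp_comp)
      ultimately show "(a \<in> P \<and> comp a \<in> Q) = (a = z)" by blast
    qed
  qed
  show ?thesis using a b c by simp
qed

lemma DP_sym:
  assumes "var z = u"
  shows "DP u F = {E\<in>F. u \<notin> vars_cl E} \<union>
     {(P \<union> Q) - {Pos u, Neg u} | P Q. P \<in> F \<and> Q \<in> F \<and> P \<inter> comp ` Q = {z}}"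
proof (cases z)
  case (Pos x1) then show ?thesis using assms by (simp add: DP_def)
next
  case (Neg x2)
  then have z: "z = Neg u" using assms by simp
  have "{(P \<union> Q) - {Pos u, Neg u} | P Q. P \<in> F \<and> Q \<in> F \<and> P \<inter> comp ` Q = {Pos u}}
      = {(P \<union> Q) - {Pos u, Neg u} | P Q. P \<in> F \<and> Q \<in> F \<and> P \<inter> comp ` Q = {Neg u}}"
  proof (rule set_eqI, rule iffI)
    fix X assume "X \<in> {(P \<union> Q) - {Pos u, Neg u} | P Q. P \<in> F \<and> Q \<in> F \<and> P \<inter> comp ` Q = {Pos u}}"
    then obtain P Q where "X = (P \<union> Q) - {Pos u, Neg u}" "P \<in> F" "Q \<in> F" "P \<inter> comp ` Q = {Pos u}" by blast
    then have "X = (Q \<union> P) - {Pos u, Neg u}" "Q \<inter> comp ` P = {Neg u}" using clash_swap[of P Q] by auto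
    then show "X \<in> {(P \<union> Q) - {Pos u, Neg u} | P Q. P \<in> F \<and> Q \<in> F \<and> P \<inter> comp ` Q = {Neg u}}"
      using \<open>P \<in> F\<close> \<open>Q \<in> F\<close> by blast
  next
    fix X assume "X \<in> {(P \<union> Q) - {Pos u, Neg u} | P Q. P \<in> F \<and> Q \<in> F \<and> P \<inter> comp ` Q = {Neg u}}"
    then obtain P Q where "X = (P \<union> Q) - {Pos u, Neg u}" "P \<in> F" "Q \<in> F" "P \<inter> comp ` Q = {Neg u}" by blast
    then have "X = (Q \<union> P) - {Pos u, Neg u}" "Q \<inter> comp ` P = {Pos u}" using clash_swap[of P Q] by auto
    then show "X \<in> {(P \<union> Q) - {Pos u, Neg u} | P Q. P \<in> F \<and> Q \<in> F \<and> P \<inter> comp ` Q = {Pos u}}"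
      using \<open>P \<in> F\<close> \<open>Q \<in> F\<close> by blast
  qed
  then show ?thesis unfolding DP_def z by simp
qed



lemma var_in_vars: "var y \<in> vars_cl E \<longleftrightarrow> y \<in> E \<or> comp y \<in> E"
  by (cases y) (auto simp: in_vars_cl)

lemma single_iff: "{E\<in>F. y\<in>E} = {P} \<Longrightarrow> E \<in> F \<Longrightarrow> (y \<in> E) = (E = P)"
  by (auto simp: set_eq_iff)

lemma dp_one:
  assumes MU: "min_unsat F" and P: "{E\<in>F. y\<in>E} = {P}" and Q: "{E\<in>F. comp y\<in>E} = {Q}"
  shows "P \<inter> comp ` Q = {y}" "P \<noteq> Q"
    "DP (var y) F = (F - {P,Q}) \<union> {(P \<union> Q) - {y, comp y}}"
    "(P \<union> Q) - {y, comp y} \<notin> F"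
proof -
  have PF: "P \<in> F" "y \<in> P" using P by auto
  have QF: "Q \<in> F" "comp y \<in> Q" using Q by auto
  have Pi: "\<And>E. E \<in> F \<Longrightarrow> (y \<in> E) = (E = P)" using single_iff[OF P] .
  have Qi: "\<And>E. E \<in> F \<Longrightarrow> (comp y \<in> E) = (E = Q)" using single_iff[OF Q] .
  show cl: "P \<inter> comp ` Q = {y}"
  proof (rule ccontr)
    assume n: "P \<inter> comp ` Q \<noteq> {y}"
    have "\<forall>Q'\<in>F. comp y \<in> Q' \<longrightarrow> P \<inter> comp ` Q' \<noteq> {y}" using n Qi by blast
    then show False using no_resolvent_false[OF MU PF] by blast
  qed
  show "P \<noteq> Q" using PF QF MU_cl[OF MU PF(1)] clause_cons by blast
  show "(P \<union> Q) - {y, comp y} \<notin> F" using resolvent_notin[OF MU P Q cl] .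
  have pn: "{Pos (var y), Neg (var y)} = {y, comp y}" by (rule posneg) simp
  have A: "{E\<in>F. var y \<notin> vars_cl E} = F - {P,Q}"
    unfolding var_in_vars using Pi Qi by blast
  have B: "{(P' \<union> Q') - {Pos (var y), Neg (var y)} | P' Q'. P' \<in> F \<and> Q' \<in> F \<and> P' \<inter> comp ` Q' = {y}}
     = {(P \<union> Q) - {y, comp y}}"
  proof -
    have "\<And>P' Q'. P' \<in> F \<Longrightarrow> Q' \<in> F \<Longrightarrow> P' \<inter> comp ` Q' = {y} \<Longrightarrow> P' = P \<and> Q' = Q"
    proof -
      fix P' Q' assume h: "P' \<in> F" "Q' \<in> F" "P' \<inter> comp ` Q' = {y}"
      then have "y \<in> P' \<inter> comp ` Q'" by simp
      then have "y \<in> P'" "comp y \<in> Q'" unfolding Int_iff comp_img by auto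
      then show "P' = P \<and> Q' = Q" using Pi Qi h by blast
    qed
    then show ?thesis unfolding pn using PF QF cl by blast
  qed
  show "DP (var y) F = (F - {P,Q}) \<union> {(P \<union> Q) - {y, comp y}}"
    unfolding DP_sym[of y "var y" F, OF refl] A B by (rule refl)
qed
lemma dp_two:
  assumes MU: "min_unsat F" and P: "{E\<in>F. x\<in>E} = {E0}" and Q: "{E\<in>F. comp x\<in>E} = {A,B}"
  shows "DP (var x) F = (F - {E0,A,B}) \<union> {(A \<union> E0) - {x, comp x}, (B \<union> E0) - {x, comp x}}"
proof -
  have AF: "A \<in> F" "comp x \<in> A" "B \<in> F" "comp x \<in> B" using Q by auto
  have E0: "E0 \<in> F" "x \<in> E0" using P by auto
  have Pi: "\<And>E. E \<in> F \<Longrightarrow> (x \<in> E) = (E = E0)" using single_iff[OF P] .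
  have Qi: "\<And>E. E \<in> F \<Longrightarrow> (comp x \<in> E) = (E = A \<or> E = B)" using Q by (auto simp: set_eq_iff)
  have cl: "C' \<inter> comp ` E0 = {comp x}" if "C' \<in> {A,B}" for C'
  proof (rule ccontr)
    assume n: "C' \<inter> comp ` E0 \<noteq> {comp x}"
    have "\<forall>Q'\<in>F. comp (comp x) \<in> Q' \<longrightarrow> C' \<inter> comp ` Q' \<noteq> {comp x}" using n Pi by auto
    moreover have "C' \<in> F" "comp x \<in> C'" using that AF by auto
    ultimately show False using no_resolvent_false[OF MU] by blast
  qed
  have pn: "{Pos (var x), Neg (var x)} = {x, comp x}" by (rule posneg) simp
  have A: "{E\<in>F. var x \<notin> vars_cl E} = F - {E0,A,B}"
  proof -
    show ?thesis unfolding var_in_vars using Pi Qi by auto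
  qed
  have B: "{(P' \<union> Q') - {Pos (var x), Neg (var x)} | P' Q'. P' \<in> F \<and> Q' \<in> F \<and> P' \<inter> comp ` Q' = {comp x}}
     = {(A \<union> E0) - {x, comp x}, (B \<union> E0) - {x, comp x}}"
  proof -
    have "\<And>P' Q'. P' \<in> F \<Longrightarrow> Q' \<in> F \<Longrightarrow> P' \<inter> comp ` Q' = {comp x} \<Longrightarrow> P' \<in> {A,B} \<and> Q' = E0"
    proof -
      fix P' Q' assume h: "P' \<in> F" "Q' \<in> F" "P' \<inter> comp ` Q' = {comp x}"
      then have "comp x \<in> P' \<inter> comp ` Q'" by simp
      then have "comp x \<in> P'" "x \<in> Q'" unfolding Int_iff comp_img comp_comp by auto
      then show "P' \<in> {A,B} \<and> Q' = E0" using Pi Qi h by simp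
    qed
    then show ?thesis unfolding pn
    proof (intro equalityI subsetI)
      fix X assume h: "\<And>P' Q'. P' \<in> F \<Longrightarrow> Q' \<in> F \<Longrightarrow> P' \<inter> comp ` Q' = {comp x} \<Longrightarrow> P' \<in> {A, B} \<and> Q' = E0"
        and "X \<in> {P' \<union> Q' - {x, comp x} |P' Q'. P' \<in> F \<and> Q' \<in> F \<and> P' \<inter> comp ` Q' = {comp x}}"
      then obtain P' Q' where "X = P' \<union> Q' - {x, comp x}" "P' \<in> F" "Q' \<in> F" "P' \<inter> comp ` Q' = {comp x}" by blast
      with h[of P' Q'] show "X \<in> {A \<union> E0 - {x, comp x}, B \<union> E0 - {x, comp x}}" by auto
    next
      fix X assume "X \<in> {A \<union> E0 - {x, comp x}, B \<union> E0 - {x, comp x}}"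
      then have "X = A \<union> E0 - {x, comp x} \<or> X = B \<union> E0 - {x, comp x}" by simp
      then show "X \<in> {P' \<union> Q' - {x, comp x} |P' Q'. P' \<in> F \<and> Q' \<in> F \<and> P' \<inter> comp ` Q' = {comp x}}"
      proof
        assume "X = A \<union> E0 - {x, comp x}"
        then show ?thesis using AF E0 cl[of A] by blast
      next
        assume "X = B \<union> E0 - {x, comp x}"
        then show ?thesis using AF E0 cl[of B] by blast
      qed
    qed
  qed
  show ?thesis
    unfolding DP_sym[of "comp x" "var x" F, OF var_comp] A B by (rule refl)
qed

lemma deg_formula:
  assumes "finite F" "A \<in> F" "B \<in> F" "A \<noteq> B" "R \<notin> F" "(z \<in> R) = (z \<in> A \<or> z \<in> B)"
  shows "ldeg F z = ldeg ((F - {A,B}) \<union> {R}) z + (if z \<in> A \<and> z \<in> B then 1 else 0)"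
proof -
  define S where "S = {E\<in>F-{A,B}. z\<in>E}"
  have fS: "finite S" using assms(1) by (simp add: S_def)
  have nS: "A \<notin> S" "B \<notin> S" "R \<notin> S" using assms by (auto simp: S_def)
  have e1: "{E\<in>F. z\<in>E} = S \<union> {E\<in>{A,B}. z\<in>E}" using assms by (auto simp: S_def)
  have e2: "{E\<in>(F - {A,B}) \<union> {R}. z\<in>E} = S \<union> {E\<in>{R}. z\<in>E}" using assms by (auto simp: S_def)
  have c1: "card {E\<in>F. z\<in>E} = card S + card {E\<in>{A,B}. z\<in>E}"
    unfolding e1 by (rule card_Un_disjoint) (use fS nS in auto)
  have c2: "card {E\<in>(F - {A,B}) \<union> {R}. z\<in>E} = card S + card {E\<in>{R}. z\<in>E}"
    unfolding e2 by (rule card_Un_disjoint) (use fS nS in auto)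
  have c3: "card {E\<in>{A,B}. z\<in>E} = (if z \<in> A then 1 else 0) + (if z \<in> B then 1 else 0)"
  proof (cases "z \<in> A"; cases "z \<in> B")
    assume "z \<in> A" "z \<in> B"
    then have h: "{E\<in>{A,B}. z\<in>E} = {A,B}" by blast
    show ?thesis unfolding h using assms(4) \<open>z \<in> A\<close> \<open>z \<in> B\<close> by simp
  next
    assume "z \<in> A" "z \<notin> B"
    then have h: "{E\<in>{A,B}. z\<in>E} = {A}" by blast
    show ?thesis unfolding h using \<open>z \<in> A\<close> \<open>z \<notin> B\<close> by simp
  next
    assume "z \<notin> A" "z \<in> B"
    then have h: "{E\<in>{A,B}. z\<in>E} = {B}" by blast
    show ?thesis unfolding h using \<open>z \<notin> A\<close> \<open>z \<in> B\<close> by simp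
  next
    assume "z \<notin> A" "z \<notin> B"
    then have h: "{E\<in>{A,B}. z\<in>E} = {}" by blast
    show ?thesis unfolding h using \<open>z \<notin> A\<close> \<open>z \<notin> B\<close> by simp
  qed
  have c4: "card {E\<in>{R}. z\<in>E} = (if z \<in> A \<or> z \<in> B then 1 else 0)"
  proof (cases "z \<in> R")
    case True then have h: "{E\<in>{R}. z\<in>E} = {R}" by blast
    show ?thesis unfolding h using True assms(6) by simp
  next
    case False then have h: "{E\<in>{R}. z\<in>E} = {}" by blast
    show ?thesis unfolding h using False assms(6) by simp
  qed
  show ?thesis unfolding ldeg_def c1 c2 c3 c4 by auto
qed



lemma var_cases: "var y = w \<Longrightarrow> y = Pos w \<or> y = Neg w" by (cases y) auto

lemma ldeg_sum: "var y = w \<Longrightarrow> ldeg F (Pos w) + ldeg F (Neg w) = ldeg F y + ldeg F (comp y)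
   \<and> min (ldeg F (Pos w)) (ldeg F (Neg w)) = min (ldeg F y) (ldeg F (comp y))"
  by (cases y) (auto simp: min.commute add.commute)

lemma count_one:
  assumes "H = (F - {E0,A,B}) \<union> {R1,R2}" "R1 = (A \<union> E0) - {x, comp x}" "R2 = (B \<union> E0) - {x, comp x}"
    "z \<in> A" "z \<notin> B" "z \<notin> E0" "z \<noteq> x" "z \<noteq> comp x" "\<forall>E\<in>F. z\<in>E \<longrightarrow> E = A"
  shows "ldeg H z = 1"
proof -
  have "{E\<in>H. z\<in>E} = {R1}"
  proof (rule set_eqI, rule iffI)
    fix E assume "E \<in> {E\<in>H. z\<in>E}"
    then have E: "E \<in> H" "z \<in> E" by auto
    show "E \<in> {R1}"
    proof (cases "E \<in> F - {E0,A,B}")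
      case True then show ?thesis using E assms(9) by auto
    next
      case False
      then have "E = R1 \<or> E = R2" using E assms(1) by auto
      moreover have "z \<notin> R2" using assms(3,5,6) by auto
      ultimately show ?thesis using E by auto
    qed
  next
    fix E assume "E \<in> {R1}"
    then show "E \<in> {E\<in>H. z\<in>E}" using assms(1,2,4,7,8) by auto
  qed
  then show ?thesis by (simp add: ldeg_def)
qed

theorem lemma39:
  fixes F :: "'v clause set" and v w :: 'v and C D :: "'v clause"
  assumes "min_unsat F"
    and "singular_tuple F v w"
    and "sdeg_tuple F v w 1 1"
    and "{E \<in> F. v \<in> vars_cl E} = {C, D}"
  shows "(\<not> m_singular F w 1 \<longrightarrow>
            m_singular F w 2
          \<and> (\<forall>x E0 E1 E2. var x = w \<and> ldeg F x = 1 \<and> E0 \<in> F \<and> x \<in> E0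
                \<and> {E \<in> F. comp x \<in> E} = {E1, E2} \<longrightarrow> {E1, E2} = {C, D})
          \<and> m_singular (DP w F) v 1
          \<and> singular_tuple F w v \<and> sdeg_tuple F w v 2 1)
       \<and> (m_singular F w 1 \<longrightarrow>
            m_singular (DP w F) v 1
          \<and> singular_tuple F w v \<and> sdeg_tuple F w v 1 1
          \<and> (\<forall>E1 E2. {E \<in> F. w \<in> vars_cl E} = {E1, E2} \<longrightarrow>
                card ({C, D} \<inter> {E1, E2}) \<le> 1))"
proof -
  note MU = assms(1)
  have fin: "finite F" using MU_fin[OF MU] .
  from assms(3) have mv: "m_singular F v 1" and mw: "m_singular (DP v F) w 1"
    by (simp_all add: sdeg_tuple_def)
  have dv: "ldeg F (Pos v) = 1" "ldeg F (Neg v) = 1"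
    using mv by (auto simp: m_singular_def singular_def vdeg_def min_def split: if_splits)
  obtain A where A: "{E\<in>F. Pos v\<in>E} = {A}" using ldeg1[OF fin dv(1)] by blast
  obtain B where B': "{E\<in>F. Neg v\<in>E} = {B}" using ldeg1[OF fin dv(2)] by blast
  have B: "{E\<in>F. comp (Pos v)\<in>E} = {B}" using B' by simp
  note d1 = dp_one[OF MU A B]
  define R where "R = (A \<union> B) - {Pos v, Neg v}"
  have G: "DP v F = (F-{A,B}) \<union> {R}" using d1(3) by (simp add: R_def)
  have RF: "R \<notin> F" using d1(4) by (simp add: R_def)
  have AB: "A \<noteq> B" using d1(2) .
  have clAB: "A \<inter> comp ` B = {Pos v}" using d1(1) .
  have AF: "A \<in> F" "Pos v \<in> A" using A by auto
  have BF: "B \<in> F" "Neg v \<in> B" using B' by auto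
  have Ai: "\<And>E. E \<in> F \<Longrightarrow> (Pos v \<in> E) = (E = A)" using single_iff[OF A] .
  have Bi: "\<And>E. E \<in> F \<Longrightarrow> (Neg v \<in> E) = (E = B)" using single_iff[OF B'] .
  have clA: "is_clause A" using MU_cl[OF MU AF(1)] .
  have clB: "is_clause B" using MU_cl[OF MU BF(1)] .
  have CD: "{C,D} = {A,B}"
  proof -
    have "{E \<in> F. v \<in> vars_cl E} = {A,B}"
      unfolding in_vars_cl using Ai Bi AF BF by auto
    then show ?thesis using assms(4) by simp
  qed
  have dw: "ldeg (DP v F) (Pos w) = 1" "ldeg (DP v F) (Neg w) = 1"
    using mw by (auto simp: m_singular_def singular_def vdeg_def min_def split: if_splits)
  have wv: "w \<noteq> v"
  proof
    assume "w = v"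
    then have "card {E\<in>DP v F. Pos v\<in>E} = 1" using dw(1) by (simp add: ldeg_def)
    then obtain E where E: "E \<in> DP v F" "Pos v \<in> E" by (metis (no_types, lifting) card_1_singletonE mem_Collect_eq singletonI)
    show False
    proof (cases "E = R")
      case True then show False using E by (simp add: R_def)
    next
      case False then have "E \<in> F" "E \<noteq> A" using E G by auto
      then show False using Ai E by simp
    qed
  qed
  have deg: "ldeg F z = ldeg (DP v F) z + (if z \<in> A \<and> z \<in> B then 1 else 0)" if "var z = w" for z
  proof -
    have "z \<noteq> Pos v" "z \<noteq> Neg v" using that wv by auto
    then have "(z \<in> R) = (z \<in> A \<or> z \<in> B)" by (auto simp: R_def)
    then show ?thesis unfolding G using deg_formula[OF fin AF(1) BF(1) AB RF] by blast
  qed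
  show ?thesis
  proof (cases "\<exists>y. var y = w \<and> y \<in> A \<and> y \<in> B")
    case True
    then obtain y where y: "var y = w" "y \<in> A" "y \<in> B" by blast
    have yc: "comp y \<notin> A" using clause_cons[OF clA y(2)] .
    have "ldeg (DP v F) y = 1" using var_cases[OF y(1)] dw by auto
    then have ly: "ldeg F y = 2" using deg[OF y(1)] y by simp
    have "ldeg (DP v F) (comp y) = 1" using var_cases[OF y(1)] dw by auto
    then have lcy: "ldeg F (comp y) = 1" using deg[of "comp y"] y(1) yc by simp
    have sums: "ldeg F (Pos w) + ldeg F (Neg w) = 3" "min (ldeg F (Pos w)) (ldeg F (Neg w)) = 1"
      using ldeg_sum[OF y(1), of F] ly lcy by auto
    have nm1: "\<not> m_singular F w 1" using sums by (simp add: m_singular_def vdeg_def)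
    have m2: "m_singular F w 2" using sums by (simp add: m_singular_def vdeg_def singular_def)
    have sY: "{E\<in>F. y\<in>E} = {A,B}"
    proof -
      have sub: "{A,B} \<subseteq> {E\<in>F. y\<in>E}" using y AF BF by auto
      have ce: "card {A,B} = card {E\<in>F. y\<in>E}" using ly AB by (simp add: ldeg_def)
      have fS: "finite {E\<in>F. y\<in>E}" using fin by simp
      show ?thesis using card_subset_eq[OF fS sub ce] by (rule sym)
    qed
    have part1: "\<forall>x E0 E1 E2. var x = w \<and> ldeg F x = 1 \<and> E0 \<in> F \<and> x \<in> E0
                \<and> {E \<in> F. comp x \<in> E} = {E1, E2} \<longrightarrow> {E1, E2} = {A, B}"
    proof (intro allI impI)
      fix x E0 E1 E2 assume h: "var x = w \<and> ldeg F x = 1 \<and> E0 \<in> F \<and> x \<in> E0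
                \<and> {E \<in> F. comp x \<in> E} = {E1, E2}"
      have hx1: "var x = w" using h by (elim conjE)
      have hx2: "ldeg F x = 1" using h by (elim conjE)
      have hx3: "{E \<in> F. comp x \<in> E} = {E1, E2}" using h by (elim conjE)
      have "x = y \<or> x = comp y" using var_eq[of x y] hx1 y(1) by metis
      moreover have "x \<noteq> y" using hx2 ly by auto
      ultimately have cxy: "comp x = y" by (metis comp_comp)
      have hx3': "{E \<in> F. y \<in> E} = {E1, E2}" using hx3 unfolding cxy .
      show "{E1, E2} = {A, B}" by (rule trans[OF sym[OF hx3'] sY])
    qed
    obtain E0 where E0: "{E\<in>F. comp y\<in>E} = {E0}" using ldeg1[OF fin lcy] by blast
    have sY': "{E\<in>F. comp (comp y)\<in>E} = {A,B}" using sY by simp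
    have H: "DP w F = (F - {E0,A,B}) \<union> {(A \<union> E0) - {comp y, comp (comp y)}, (B \<union> E0) - {comp y, comp (comp y)}}"
      using dp_two[OF MU E0 sY'] y(1) by simp
    have E0F: "E0 \<in> F" "comp y \<in> E0" using E0 by auto
    have E0A: "E0 \<noteq> A" using E0F yc by auto
    have E0B: "E0 \<noteq> B" using E0F clause_cons[OF clB y(3)] by auto
    have pv: "Pos v \<noteq> comp y" "Pos v \<noteq> comp (comp y)" "Neg v \<noteq> comp y" "Neg v \<noteq> comp (comp y)"
      using y(1) wv by (metis var.simps var_comp)+
    have c1: "ldeg (DP w F) (Pos v) = 1"
    proof (rule count_one[OF H refl refl AF(2)])
      show "Pos v \<notin> B" using Ai BF AB by auto
      show "Pos v \<notin> E0" using Ai E0F E0A by auto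
      show "\<forall>E\<in>F. Pos v \<in> E \<longrightarrow> E = A" using Ai by auto
    qed (use pv in auto)
    have H': "DP w F = (F - {E0,B,A}) \<union> {(B \<union> E0) - {comp y, comp (comp y)}, (A \<union> E0) - {comp y, comp (comp y)}}"
      using H by (simp add: insert_commute)
    have c2: "ldeg (DP w F) (Neg v) = 1"
    proof (rule count_one[OF H' refl refl BF(2)])
      show "Neg v \<notin> A" using Bi AF AB by auto
      show "Neg v \<notin> E0" using Bi E0F E0B by auto
      show "\<forall>E\<in>F. Neg v \<in> E \<longrightarrow> E = B" using Bi by auto
    qed (use pv in auto)
    have mH: "m_singular (DP w F) v 1" using c1 c2 by (simp add: m_singular_def singular_def vdeg_def)
    have sw: "singular F w" using m2 by (simp add: m_singular_def)
    show ?thesis unfolding CD using nm1 m2 part1 mH sw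
      by (simp add: singular_tuple_def sdeg_tuple_def m_singular_def)
  next
    case False
    have lp: "ldeg F (Pos w) = 1" using deg[of "Pos w"] dw False by auto
    have ln: "ldeg F (Neg w) = 1" using deg[of "Neg w"] dw False by auto
    have m1: "m_singular F w 1" using lp ln by (simp add: m_singular_def singular_def vdeg_def)
    obtain A' where A': "{E\<in>F. Pos w\<in>E} = {A'}" using ldeg1[OF fin lp] by blast
    obtain B' where B2: "{E\<in>F. Neg w\<in>E} = {B'}" using ldeg1[OF fin ln] by blast
    have B'': "{E\<in>F. comp (Pos w)\<in>E} = {B'}" using B2 by simp
    note d2 = dp_one[OF MU A' B'']
    define R' where "R' = (A' \<union> B') - {Pos w, Neg w}"
    have H: "DP w F = (F-{A',B'}) \<union> {R'}" using d2(3) by (simp add: R'_def)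
    have A'F: "A' \<in> F" "Pos w \<in> A'" using A' by auto
    have B'F: "B' \<in> F" "Neg w \<in> B'" using B2 by auto
    have A'i: "\<And>E. E \<in> F \<Longrightarrow> (Pos w \<in> E) = (E = A')" using single_iff[OF A'] .
    have B'i: "\<And>E. E \<in> F \<Longrightarrow> (Neg w \<in> E) = (E = B')" using single_iff[OF B2] .
    have RF': "R' \<notin> F" using d2(4) by (simp add: R'_def)
    have deg2: "ldeg F z = ldeg (DP w F) z + (if z \<in> A' \<and> z \<in> B' then 1 else 0)" if "var z = v" for z
    proof -
      have "z \<noteq> Pos w" "z \<noteq> Neg w" using that wv by auto
      then have "(z \<in> R') = (z \<in> A' \<or> z \<in> B')" by (auto simp: R'_def)
      then show ?thesis unfolding H using deg_formula[OF fin A'F(1) B'F(1) d2(2) RF'] by blast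
    qed
    have "\<not> (Pos v \<in> A' \<and> Pos v \<in> B')"
    proof
      assume h: "Pos v \<in> A' \<and> Pos v \<in> B'"
      have "A' = A" using Ai[OF A'F(1)] h by blast
      moreover have "B' = A" using Ai[OF B'F(1)] h by blast
      ultimately show False using d2(2) by simp
    qed
    then have "ldeg F (Pos v) = ldeg (DP w F) (Pos v)" using deg2[of "Pos v"] by simp
    then have c1: "ldeg (DP w F) (Pos v) = 1" using dv by simp
    have "\<not> (Neg v \<in> A' \<and> Neg v \<in> B')"
    proof
      assume h: "Neg v \<in> A' \<and> Neg v \<in> B'"
      have "A' = B" using Bi[OF A'F(1)] h by blast
      moreover have "B' = B" using Bi[OF B'F(1)] h by blast
      ultimately show False using d2(2) by simp
    qed
    then have "ldeg F (Neg v) = ldeg (DP w F) (Neg v)" using deg2[of "Neg v"] by simp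
    then have c2: "ldeg (DP w F) (Neg v) = 1" using dv by simp
    have mH: "m_singular (DP w F) v 1" using c1 c2 by (simp add: m_singular_def singular_def vdeg_def)
    have Wset: "{E \<in> F. w \<in> vars_cl E} = {A',B'}"
      unfolding in_vars_cl using A'i B'i A'F B'F by auto
    have cardp: "card ({A, B} \<inter> {A', B'}) \<le> 1"
    proof (cases "A \<in> {A',B'} \<and> B \<in> {A',B'}")
      case True
      then have "(A = A' \<and> B = B') \<or> (A = B' \<and> B = A')" using AB by auto
      then show ?thesis
      proof
        assume h: "A = A' \<and> B = B'"
        have "Pos w \<in> A \<inter> comp ` B" unfolding Int_iff comp_img using h A'F B'F by simp
        then show ?thesis using clAB wv by simp
      next
        assume h: "A = B' \<and> B = A'"
        have "Neg w \<in> A \<inter> comp ` B" unfolding Int_iff comp_img using h A'F B'F by simp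
        then show ?thesis using clAB by simp
      qed
    next
      case False
      then have "{A, B} \<inter> {A', B'} \<subseteq> {A} \<or> {A, B} \<inter> {A', B'} \<subseteq> {B}" by auto
      then show ?thesis
      proof
        assume h: "{A, B} \<inter> {A', B'} \<subseteq> {A}"
        have "finite {A}" by simp
        from card_mono[OF this h] show ?thesis by simp
      next
        assume h: "{A, B} \<inter> {A', B'} \<subseteq> {B}"
        have "finite {B}" by simp
        from card_mono[OF this h] show ?thesis by simp
      qed
    qed
    have fin4: "\<forall>E1 E2. {E \<in> F. w \<in> vars_cl E} = {E1, E2} \<longrightarrow> card ({A, B} \<inter> {E1, E2}) \<le> 1"
    proof (intro allI impI)
      fix E1 E2 assume "{E \<in> F. w \<in> vars_cl E} = {E1, E2}"
      then have "{E1, E2} = {A', B'}" using Wset by simp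
      then show "card ({A, B} \<inter> {E1, E2}) \<le> 1" using cardp by simp
    qed
    show ?thesis unfolding CD using m1 mH fin4
      by (simp add: singular_tuple_def sdeg_tuple_def m_singular_def)
  qed
qed

end
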